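(* Let $N\ge2$, let $v_1,\dots,v_N$ be distinct reals with prior probabilities $p(v_n)>0$, $\sum_np(v_n)=1$, let $\lambda,\sigma_Z,T>0$ and $G$ the CDF of $N(0,\sigma_Z^2T)$. Fix $M\ge1$ and consider the problem $$\max_{p(\cdot|\cdot),q(\cdot)}\sum_{m=1}^M\mathbb E[\tilde v|s_m]I_mq(s_m)-\lambda\Big\{\sum_{m=1}^M\sum_{n=1}^N\log\big(p(v_n|s_m)\big)p(v_n|s_m)q(s_m)-\sum_{n=1}^N\log\big(p(v_n)\big)p(v_n)\Big\}$$ subject to $\sum_{n=1}^Np(v_n|s_m)=1$ for $1\le m\le M$ and $\sum_{m=1}^Mp(v_n|s_m)q(s_m)=p(v_n)$ for $1\le n\le N$. Then the optimal posteriors for signal states $s_m$ with $q(s_m)>0$ are $$p(v_n|s_m)=\frac{e^{(v_nI_m+\mu_n)/\lambda}}{\sum_{n'=1}^Ne^{(v_{n'}I_m+\mu_{n'})/\lambda}},\qquad1\le n\le N,$$ where, for given $q(s_1),\dots,q(s_M)$, a vector $(\mu_1,\dots,\mu_N)$ such that the Bayes plausibility constraint holds exists and is unique up to an additive constant. The optimal value is $$\max_{q(\cdot)}\Big\{\lambda\sum_{m=1}^M\log\Big(\sum_{n=1}^Ne^{(v_nI_m+\mu_n)/\lambda}\Big)q(s_m)+\lambda\sum_{n=1}^N\log\big(p(v_n)\big)p(v_n)-\sum_{n=1}^N\mu_np(v_n)\Big\},$$ and there exists an optimal $q$.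
   Context: The signal takes $M$ values $s_1,\dots,s_M$ with probabilities $q(s_m)\ge0$ summing to 1 (ranging over the simplex of $\mathbb R^M$); $Q_0=0$, $Q_m=\sum_{i=1}^mq(s_i)$, and $I_m=\frac1{q(s_m)}\int_{Q_{m-1}}^{Q_m}G^{-1}(u)\,du$ for $q(s_m)>0$. $\mathbb E[\tilde v|s_m]=\sum_nv_np(v_n|s_m)$. States with $q(s_m)=0$ do not contribute to the sums. The objective is the informed trader's expected Kyle–Back trading profit minus the mutual-information cost. *)

theory Defs
  imports "HOL-Probability.Probability"
begin

definition normal_cdf :: "real \<Rightarrow> real \<Rightarrow> real" where
  "normal_cdf s = cdf (density lborel (normal_density 0 s))"

text \<open>Inverse of a (strictly increasing) CDF, used on the open interval (0,1).\<close>
definition inv_cdf :: "(real \<Rightarrow> real) \<Rightarrow> real \<Rightarrow> real" where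
  "inv_cdf F u = (THE x. F x = u)"

definition signal_simplex :: "nat \<Rightarrow> (nat \<Rightarrow> real) set" where
  "signal_simplex M = {q. (\<forall>m\<in>{1..M}. q m \<ge> 0) \<and> (\<Sum>m=1..M. q m) = 1}"

definition cumq :: "(nat \<Rightarrow> real) \<Rightarrow> nat \<Rightarrow> real" where
  "cumq q m = (\<Sum>i=1..m. q i)"

definition Imean :: "(real \<Rightarrow> real) \<Rightarrow> (nat \<Rightarrow> real) \<Rightarrow> nat \<Rightarrow> real" where
  "Imean G q m = (1 / q m) *
     interval_lebesgue_integral lborel (ereal (cumq q (m - 1))) (ereal (cumq q m)) (inv_cdf G)"

text \<open>E[v | s_m] for posteriors P m n = p(v_n | s_m).\<close>
definition cond_mean :: "nat \<Rightarrow> (nat \<Rightarrow> real) \<Rightarrow> (nat \<Rightarrow> nat \<Rightarrow> real) \<Rightarrow> nat \<Rightarrow> real" where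
  "cond_mean N v P m = (\<Sum>n=1..N. v n * P m n)"

definition bayes_plausible ::
  "nat \<Rightarrow> nat \<Rightarrow> (nat \<Rightarrow> real) \<Rightarrow> (nat \<Rightarrow> nat \<Rightarrow> real) \<Rightarrow> (nat \<Rightarrow> real) \<Rightarrow> bool" where
  "bayes_plausible N M p P q \<longleftrightarrow> (\<forall>n\<in>{1..N}. (\<Sum>m=1..M. P m n * q m) = p n)"

definition feasible ::
  "nat \<Rightarrow> nat \<Rightarrow> (nat \<Rightarrow> real) \<Rightarrow> (nat \<Rightarrow> nat \<Rightarrow> real) \<Rightarrow> (nat \<Rightarrow> real) \<Rightarrow> bool" where
  "feasible N M p P q \<longleftrightarrow>
     q \<in> signal_simplex M \<and>
     (\<forall>m\<in>{1..M}. \<forall>n\<in>{1..N}. P m n \<ge> 0) \<and>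
     (\<forall>m\<in>{1..M}. (\<Sum>n=1..N. P m n) = 1) \<and>
     bayes_plausible N M p P q"

text \<open>Objective: expected trading profit minus lambda times mutual information.
  States with q(s_m) = 0 do not contribute.\<close>
definition objective ::
  "nat \<Rightarrow> nat \<Rightarrow> (nat \<Rightarrow> real) \<Rightarrow> (nat \<Rightarrow> real) \<Rightarrow> real \<Rightarrow> (real \<Rightarrow> real)
   \<Rightarrow> (nat \<Rightarrow> nat \<Rightarrow> real) \<Rightarrow> (nat \<Rightarrow> real) \<Rightarrow> real" where
  "objective N M v p lam G P q =
     (\<Sum>m\<in>{m\<in>{1..M}. q m > 0}. cond_mean N v P m * Imean G q m * q m)
     - lam * ((\<Sum>m\<in>{m\<in>{1..M}. q m > 0}. \<Sum>n=1..N. ln (P m n) * P m n * q m)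
              - (\<Sum>n=1..N. ln (p n) * p n))"

definition partition_fn ::
  "nat \<Rightarrow> (nat \<Rightarrow> real) \<Rightarrow> real \<Rightarrow> (real \<Rightarrow> real) \<Rightarrow> (nat \<Rightarrow> real) \<Rightarrow> (nat \<Rightarrow> real) \<Rightarrow> nat \<Rightarrow> real" where
  "partition_fn N v lam G q \<mu> m = (\<Sum>n'=1..N. exp ((v n' * Imean G q m + \<mu> n') / lam))"

definition gibbs_post ::
  "nat \<Rightarrow> (nat \<Rightarrow> real) \<Rightarrow> real \<Rightarrow> (real \<Rightarrow> real) \<Rightarrow> (nat \<Rightarrow> real) \<Rightarrow> (nat \<Rightarrow> real)
   \<Rightarrow> nat \<Rightarrow> nat \<Rightarrow> real" where
  "gibbs_post N v lam G q \<mu> m n =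
     exp ((v n * Imean G q m + \<mu> n) / lam) / partition_fn N v lam G q \<mu> m"

definition value_q ::
  "nat \<Rightarrow> nat \<Rightarrow> (nat \<Rightarrow> real) \<Rightarrow> (nat \<Rightarrow> real) \<Rightarrow> real \<Rightarrow> (real \<Rightarrow> real)
   \<Rightarrow> (nat \<Rightarrow> real) \<Rightarrow> (nat \<Rightarrow> real) \<Rightarrow> real" where
  "value_q N M v p lam G q \<mu> =
     lam * (\<Sum>m\<in>{m\<in>{1..M}. q m > 0}. ln (partition_fn N v lam G q \<mu> m) * q m)
     + lam * (\<Sum>n=1..N. ln (p n) * p n)
     - (\<Sum>n=1..N. \<mu> n * p n)"

end

theory Submission
  imports Defs "HOL-Real_Asymp.Real_Asymp"
begin

lemma normal_real_distribution:
  assumes "s > 0" shows "real_distribution (density lborel (normal_density 0 s))"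
  using prob_space_normal_density[OF assms] by (auto simp: real_distribution_def real_distribution_axioms_def)

lemma quantile_facts:
  assumes s: "s > 0"
  shows "set_integrable lborel {0<..<1} (inv_cdf (normal_cdf s))"
proof -
  let ?M = "density lborel (normal_density 0 s)"
  interpret cdf_distribution ?M using normal_real_distribution[OF s] by (simp add: cdf_distribution_def)
  have Gdef: "normal_cdf s = C" by (simp add: normal_cdf_def)
  have atom: "measure ?M {x} = 0" for x
  proof -
    have "AE t in lborel. ennreal (normal_density 0 s t) * indicator {x} t = 0"
      using AE_lborel_singleton[of x] by (auto elim!: eventually_mono)
    then have "(\<integral>\<^sup>+ t. ennreal (normal_density 0 s t) * indicator {x} t \<partial>lborel) = 0"
      by (subst nn_integral_0_iff_AE) auto
    moreover have "emeasure ?M {x} = (\<integral>\<^sup>+ t. ennreal (normal_density 0 s t) * indicator {x} t \<partial>lborel)"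
      by (rule emeasure_density) auto
    ultimately show ?thesis by (simp add: measure_def)
  qed
  have cont: "isCont C x" for x using isCont_cdf atom by blast
  have smono: "C x < C y" if "x < y" for x y
  proof -
    have "measure ?M {x<..y} > 0"
    proof (rule ccontr)
      assume "\<not> measure ?M {x<..y} > 0"
      then have "emeasure ?M {x<..y} = 0"
        by (simp add: emeasure_eq_measure measure_nonneg order.antisym)
      moreover have "emeasure ?M {x<..y} = (\<integral>\<^sup>+ t. ennreal (normal_density 0 s t) * indicator {x<..y} t \<partial>lborel)"
        by (rule emeasure_density) auto
      ultimately have "AE t in lborel. ennreal (normal_density 0 s t) * indicator {x<..y} t = 0"
        by (subst nn_integral_0_iff_AE[symmetric]) auto
      then have "AE t in lborel. t \<notin> {x<..y}"
      proof (rule eventually_mono)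
        fix t assume "ennreal (normal_density 0 s t) * indicator {x<..y} t = 0"
        then show "t \<notin> {x<..y}" using normal_density_pos[OF s, of 0 t]
          by (auto simp: indicator_def ennreal_eq_0_iff split: if_splits)
      qed
      then have "{x<..y} \<in> null_sets lborel" by (subst AE_iff_null_sets) auto
      then have "emeasure lborel {x<..y} = 0" by (rule null_setsD1)
      then show False using that by simp
    qed
    then show ?thesis using cdf_diff_eq[OF that] by simp
  qed
  have inv: "inv_cdf C w = I w" if w: "0 < w" "w < 1" for w
  proof -
    have ge: "w \<le> C (I w)" using pseudoinverse[OF w, of "I w"] by (metis order_refl)
    have lt: "C x < w" if "x < I w" for x using pseudoinverse[OF w, of x] that by (metis not_le)
    have "C (I w) \<le> w"
    proof (rule tendsto_upperbound)
      show "(C \<longlongrightarrow> C (I w)) (at_left (I w))"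
        using cont[of "I w"] by (simp add: isCont_def filterlim_at_split)
      show "\<forall>\<^sub>F x in at_left (I w). C x \<le> w"
        by (rule eventually_at_leftI[of "I w - 1"]) (auto intro: less_imp_le lt)
    qed simp
    with ge have eq: "C (I w) = w" by simp
    show ?thesis unfolding inv_cdf_def
    proof (rule the_equality)
      fix x assume "C x = w"
      then show "x = I w" using smono[of x "I w"] smono[of "I w" x] eq by (cases "x < I w"; cases "I w < x") auto
    qed (rule eq)
  qed
  have "integrable ?M (\<lambda>x. x)"
    using integrable_normal_moment_nz_1[OF s, of 0]
    by (subst integrable_density) (auto simp: mult.commute)
  then have "integrable (distr (restrict_space lborel {0<..<1::real}) borel I) (\<lambda>x. x)"
    using distr_I_eq_M by simp
  then have "integrable (restrict_space lborel {0<..<1::real}) I"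
    by (subst (asm) integrable_distr_eq) auto
  then have "set_integrable lborel {0<..<1} I"
    by (simp add: set_integrable_def integrable_restrict_space)
  then show ?thesis unfolding Gdef
    by (rule set_integrable_cong[THEN iffD1, rotated -1]) (auto simp: inv)
qed


lemma J_eq:
  fixes f :: "real \<Rightarrow> real"
  assumes f: "set_integrable lborel {0<..<1} f" and ab: "0 \<le> a" "a \<le> b" "b \<le> 1"
  shows "interval_lebesgue_integral lborel (ereal a) (ereal b) f = integral {0..b} f - integral {0..a} f"
proof -
  have f01: "f integrable_on {0..1}"
    using set_borel_integral_eq_integral(1)[OF f] integrable_on_Icc_iff_Ioo by blast
  have "set_integrable lborel (einterval a b) f"
    by (rule set_integrable_subset[OF f]) (use ab in \<open>auto simp: einterval_def\<close>)
  then have "interval_lebesgue_integral lborel (ereal a) (ereal b) f = integral (einterval a b) f"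
    using ab by (intro interval_integral_eq_integral') auto
  also have "einterval a b = {a<..<b}" by (auto simp: einterval_def)
  also have "integral {a<..<b} f = integral {a..b} f" by (simp add: integral_open_interval_real)
  also have "integral {a..b} f = integral {0..b} f - integral {0..a} f"
  proof -
    have "f integrable_on {0..b}" by (rule integrable_on_subinterval[OF f01]) (use ab in auto)
    from Henstock_Kurzweil_Integration.integral_combine[OF _ _ this, of a] ab show ?thesis by simp
  qed
  finally show ?thesis .
qed

lemma Phi_cont:
  fixes f :: "real \<Rightarrow> real"
  assumes f: "set_integrable lborel {0<..<1} f"
  shows "continuous_on {0..1} (\<lambda>x. integral {0..x} f)"
proof -
  have f01: "f integrable_on {0..1}"
    using set_borel_integral_eq_integral(1)[OF f] integrable_on_Icc_iff_Ioo by blast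
  then show ?thesis by (rule indefinite_integral_continuous_1)
qed

lemma gibbs_ineq:
  fixes P a :: "nat \<Rightarrow> real" and S :: "nat set" and lam :: real
  assumes S: "finite S" "S \<noteq> {}" and lam: "lam > 0"
    and P0: "\<forall>n\<in>S. P n \<ge> 0" and P1: "(\<Sum>n\<in>S. P n) = 1"
  defines "Z \<equiv> (\<Sum>n\<in>S. exp (a n / lam))"
  shows "(\<Sum>n\<in>S. P n * a n) - lam * (\<Sum>n\<in>S. ln (P n) * P n) \<le> lam * ln Z"
    and "(\<Sum>n\<in>S. P n * a n) - lam * (\<Sum>n\<in>S. ln (P n) * P n) = lam * ln Z
          \<longleftrightarrow> (\<forall>n\<in>S. P n = exp (a n / lam) / Z)"
proof -
  define \<pi> where "\<pi> n = exp (a n / lam) / Z" for n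
  have Zpos: "Z > 0" unfolding Z_def using S by (intro sum_pos) auto
  have pipos: "\<pi> n > 0" for n using Zpos by (simp add: \<pi>_def)
  have pisum: "(\<Sum>n\<in>S. \<pi> n) = 1" using Zpos by (simp add: \<pi>_def Z_def sum_divide_distrib[symmetric])
  have lnpi: "ln (\<pi> n) = a n / lam - ln Z" for n using Zpos by (simp add: \<pi>_def ln_div)
  define h where "h n = P n * (ln (P n) - ln (\<pi> n)) - (P n - \<pi> n)" for n
  have hnn: "h n \<ge> 0" if "n \<in> S" for n
  proof (cases "P n = 0")
    case True then show ?thesis using pipos[of n] by (simp add: h_def)
  next
    case False
    then have Pp: "P n > 0" using P0 that by force
    have "ln (\<pi> n / P n) \<le> \<pi> n / P n - 1" using Pp pipos[of n] by (intro ln_le_minus_one) auto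
    then have "P n * ln (\<pi> n / P n) \<le> P n * (\<pi> n / P n - 1)" using Pp by (intro mult_left_mono) auto
    then show ?thesis using Pp pipos[of n] by (simp add: h_def ln_div algebra_simps)
  qed
  have h0: "h n = 0 \<longleftrightarrow> P n = \<pi> n" if "n \<in> S" for n
  proof
    assume h: "h n = 0"
    show "P n = \<pi> n"
    proof (cases "P n = 0")
      case True then show ?thesis using h pipos[of n] by (simp add: h_def)
    next
      case False
      then have Pp: "P n > 0" using P0 that by force
      have "P n * ln (\<pi> n / P n) = P n * (\<pi> n / P n - 1)"
        using h Pp pipos[of n] by (simp add: h_def ln_div algebra_simps)
      then have "ln (\<pi> n / P n) = \<pi> n / P n - 1" using Pp by simp
      then have "\<pi> n / P n = 1" using Pp pipos[of n] by (intro ln_eq_minus_one) auto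
      then show ?thesis using Pp by simp
    qed
  qed (simp add: h_def)
  have key: "lam * ln Z - ((\<Sum>n\<in>S. P n * a n) - lam * (\<Sum>n\<in>S. ln (P n) * P n)) = lam * (\<Sum>n\<in>S. h n)"
  proof -
    have "(\<Sum>n\<in>S. h n) = (\<Sum>n\<in>S. P n * ln (P n)) - (\<Sum>n\<in>S. P n * (a n / lam)) + (\<Sum>n\<in>S. P n) * ln Z
            - (\<Sum>n\<in>S. P n) + (\<Sum>n\<in>S. \<pi> n)"
      by (simp add: h_def lnpi algebra_simps sum.distrib sum_subtractf sum_distrib_left sum_distrib_right)
    also have "\<dots> = (\<Sum>n\<in>S. P n * ln (P n)) - (\<Sum>n\<in>S. P n * a n) / lam + ln Z"
      using P1 pisum by (simp add: sum_divide_distrib)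
    finally show ?thesis using lam by (simp add: field_simps mult.commute)
  qed
  have sh: "(\<Sum>n\<in>S. h n) \<ge> 0" using hnn by (intro sum_nonneg) auto
  show "(\<Sum>n\<in>S. P n * a n) - lam * (\<Sum>n\<in>S. ln (P n) * P n) \<le> lam * ln Z"
    using key sh lam by (smt (verit) mult_nonneg_nonneg)
  have "(\<Sum>n\<in>S. P n * a n) - lam * (\<Sum>n\<in>S. ln (P n) * P n) = lam * ln Z \<longleftrightarrow> (\<Sum>n\<in>S. h n) = 0"
    using key lam by auto
  also have "\<dots> \<longleftrightarrow> (\<forall>n\<in>S. h n = 0)" using S hnn by (simp add: sum_nonneg_eq_0_iff)
  also have "\<dots> \<longleftrightarrow> (\<forall>n\<in>S. P n = exp (a n / lam) / Z)" using h0 by (simp add: \<pi>_def)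
  finally show "(\<Sum>n\<in>S. P n * a n) - lam * (\<Sum>n\<in>S. ln (P n) * P n) = lam * ln Z
          \<longleftrightarrow> (\<forall>n\<in>S. P n = exp (a n / lam) / Z)" .
qed


lemma compact_box:
  fixes B :: "nat \<Rightarrow> 'a::topological_space set"
  assumes "\<And>i. compact (B i)"
  shows "compact (PiE UNIV B)"
proof -
  have "compactin (product_topology (\<lambda>i. euclidean) UNIV) (PiE UNIV B)"
    using assms by (subst compactin_PiE) auto
  then show ?thesis by (simp add: euclidean_product_topology)
qed

lemma existence_mu:
  fixes a :: "nat \<Rightarrow> nat \<Rightarrow> real" and q p :: "nat \<Rightarrow> real" and lam :: real
  assumes N: "N \<ge> 1" and lam: "lam > 0"
    and q0: "\<forall>m\<in>{1..M}. q m \<ge> 0" and q1: "(\<Sum>m=1..M. q m) = 1"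
    and p0: "\<forall>n\<in>{1..N}. p n > 0" and p1: "(\<Sum>n=1..N. p n) = 1"
  shows "\<exists>\<mu>. \<forall>n\<in>{1..N}. (\<Sum>m=1..M. exp ((a m n + \<mu> n) / lam) /
            (\<Sum>n'=1..N. exp ((a m n' + \<mu> n') / lam)) * q m) = p n"
proof -
  define Z where "Z \<mu> m = (\<Sum>n=1..N. exp ((a m n + \<mu> n) / lam))" for \<mu> :: "nat \<Rightarrow> real" and m
  define D where "D \<mu> = (\<Sum>m=1..M. q m * (lam * ln (Z \<mu> m))) - (\<Sum>n=1..N. \<mu> n * p n)" for \<mu>
  have Zpos: "Z \<mu> m > 0" for \<mu> m unfolding Z_def using N by (intro sum_pos) auto
  have Zne: "Z \<mu> m \<noteq> 0" for \<mu> m using Zpos[of \<mu> m] by simp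
  have Dcont: "continuous_on UNIV D"
    unfolding D_def Z_def using Zne[unfolded Z_def] lam
    by (intro continuous_intros continuous_on_product_coordinates) auto
  define A where "A = (\<Sum>m=1..M. \<Sum>n=1..N. \<bar>a m n\<bar>)"
  have Abound: "\<bar>a m n\<bar> \<le> A" if "m \<in> {1..M}" "n \<in> {1..N}" for m n
  proof -
    have "\<bar>a m n\<bar> \<le> (\<Sum>n=1..N. \<bar>a m n\<bar>)" using that by (intro member_le_sum) auto
    also have "\<dots> \<le> A" unfolding A_def using that by (intro member_le_sum[where i=m and A="{1..M}"] sum_nonneg) auto
    finally show ?thesis .
  qed
  have p0': "p n \<ge> 0" if "n \<in> {1..N}" for n using p0 that less_imp_le by blast
  define pm where "pm = Min (p ` {1..N})"
  have pm: "pm > 0" "\<And>n. n \<in> {1..N} \<Longrightarrow> pm \<le> p n"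
    using p0 N unfolding pm_def by (auto simp: Min_gr_iff)
  have Dshift: "D (\<lambda>n. \<mu> n + c) = D \<mu>" for \<mu> c
  proof -
    have "Z (\<lambda>n. \<mu> n + c) m = exp (c / lam) * Z \<mu> m" for m
      unfolding Z_def by (simp add: sum_distrib_left add_divide_distrib exp_add[symmetric] algebra_simps)
    then have "ln (Z (\<lambda>n. \<mu> n + c) m) = c / lam + ln (Z \<mu> m)" for m
      using Zne by (simp add: ln_mult)
    then have "(\<Sum>m=1..M. q m * (lam * ln (Z (\<lambda>n. \<mu> n + c) m))) = (\<Sum>m=1..M. q m * (lam * ln (Z \<mu> m))) + c"
      using lam q1 by (simp add: algebra_simps sum.distrib sum_distrib_left[symmetric] sum_distrib_right[symmetric])
    moreover have "(\<Sum>n=1..N. (\<mu> n + c) * p n) = (\<Sum>n=1..N. \<mu> n * p n) + c"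
      using p1 by (simp add: algebra_simps sum.distrib sum_distrib_left[symmetric])
    ultimately show ?thesis by (simp add: D_def)
  qed
  have Drestr: "D \<mu> = D \<mu>'" if "\<forall>n\<in>{1..N}. \<mu> n = \<mu>' n" for \<mu> \<mu>'
    unfolding D_def Z_def using that by (intro arg_cong2[where f="(-)"] sum.cong) auto
  have Dlow: "D \<mu> \<ge> pm * (Max (\<mu> ` {1..N}) - Min (\<mu> ` {1..N})) - A" for \<mu>
  proof -
    let ?mx = "Max (\<mu> ` {1..N})" and ?mn = "Min (\<mu> ` {1..N})"
    have "?mx \<in> \<mu> ` {1..N}" using N by (intro Max_in) auto
    then obtain k where k: "k \<in> {1..N}" "\<mu> k = ?mx" by auto
    have "?mn \<in> \<mu> ` {1..N}" using N by (intro Min_in) auto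
    then obtain j where j: "j \<in> {1..N}" "\<mu> j = ?mn" by auto
    have "lam * ln (Z \<mu> m) \<ge> ?mx - A" if m: "m \<in> {1..M}" for m
    proof -
      have "exp ((a m k + \<mu> k) / lam) \<le> Z \<mu> m" unfolding Z_def using k by (intro member_le_sum) auto
      then have "(a m k + \<mu> k) / lam \<le> ln (Z \<mu> m)" using Zpos by (subst ln_ge_iff) auto
      then have "a m k + \<mu> k \<le> lam * ln (Z \<mu> m)" using lam by (simp add: field_simps)
      then show ?thesis using Abound[OF m k(1)] k by linarith
    qed
    then have "(\<Sum>m=1..M. q m * (lam * ln (Z \<mu> m))) \<ge> (\<Sum>m=1..M. q m * (?mx - A))"
      using q0 by (intro sum_mono mult_left_mono) auto
    also have "(\<Sum>m=1..M. q m * (?mx - A)) = ?mx - A" using q1 by (simp add: sum_distrib_right[symmetric])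
    finally have t1: "(\<Sum>m=1..M. q m * (lam * ln (Z \<mu> m))) \<ge> ?mx - A" .
    have "(\<Sum>n=1..N. (?mx - \<mu> n) * p n) \<ge> (?mx - \<mu> j) * p j"
      using j p0' by (intro member_le_sum[where i=j and f="\<lambda>n. (?mx - \<mu> n) * p n"] mult_nonneg_nonneg) auto
    moreover have "(?mx - \<mu> j) * p j \<ge> (?mx - ?mn) * pm"
      using j pm p0 Max_ge[of "\<mu> ` {1..N}" "\<mu> j"] by (intro mult_mono) auto
    moreover have "(\<Sum>n=1..N. (?mx - \<mu> n) * p n) = ?mx - (\<Sum>n=1..N. \<mu> n * p n)"
    proof -
      have "(\<Sum>n=1..N. (?mx - \<mu> n) * p n) = (\<Sum>n=1..N. ?mx * p n) - (\<Sum>n=1..N. \<mu> n * p n)"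
        by (simp add: left_diff_distrib sum_subtractf)
      also have "(\<Sum>n=1..N. ?mx * p n) = ?mx" using p1 by (simp add: sum_distrib_left[symmetric])
      finally show ?thesis .
    qed
    ultimately have t2: "(\<Sum>n=1..N. \<mu> n * p n) \<le> ?mx - (?mx - ?mn) * pm" by linarith
    show ?thesis using t1 t2 unfolding D_def by (simp add: algebra_simps)
  qed
  have D0: "D (\<lambda>_. 0) \<le> lam * ln (real N) + A"
  proof -
    have "lam * ln (Z (\<lambda>_. 0) m) \<le> lam * ln (real N) + A" if m: "m \<in> {1..M}" for m
    proof -
      have "Z (\<lambda>_. 0) m \<le> (\<Sum>n=1..N. exp (A / lam))"
        unfolding Z_def using Abound[OF m] lam
        by (intro sum_mono) (auto intro!: divide_right_mono dest!: abs_le_D1)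
      also have "\<dots> = real N * exp (A / lam)" by simp
      finally have "ln (Z (\<lambda>_. 0) m) \<le> ln (real N * exp (A / lam))"
        using Zpos N by (subst ln_le_cancel_iff) auto
      also have "\<dots> = ln (real N) + A / lam" using N by (simp add: ln_mult)
      finally show ?thesis using lam by (simp add: field_simps)
    qed
    then have "(\<Sum>m=1..M. q m * (lam * ln (Z (\<lambda>_. 0) m))) \<le> (\<Sum>m=1..M. q m * (lam * ln (real N) + A))"
      using q0 by (intro sum_mono mult_left_mono) auto
    also have "\<dots> = lam * ln (real N) + A" using q1 by (simp add: sum_distrib_right[symmetric])
    finally show ?thesis by (simp add: D_def)
  qed
  define R where "R = (lam * ln (real N) + 2 * A) / pm"
  define K where "K = PiE UNIV (\<lambda>n. if n \<in> {1..N} then {0..R} else {0::real})"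
  have Kc: "compact K" unfolding K_def by (intro compact_box) auto
  have A0: "A \<ge> 0" unfolding A_def by (intro sum_nonneg) auto
  have R0: "R \<ge> 0" unfolding R_def using pm A0 N lam by (intro divide_nonneg_pos) auto
  have K0: "(\<lambda>_. 0) \<in> K" unfolding K_def using R0 by auto
  obtain \<mu>s where \<mu>s: "\<mu>s \<in> K" "\<forall>y\<in>K. D \<mu>s \<le> D y"
    using continuous_attains_inf[OF Kc _ continuous_on_subset[OF Dcont]] K0 by blast
  have glob: "D \<mu>s \<le> D \<mu>" for \<mu>
  proof -
    let ?mx = "Max (\<mu> ` {1..N})" and ?mn = "Min (\<mu> ` {1..N})"
    show ?thesis
    proof (cases "?mx - ?mn \<le> R")
      case True
      define \<mu>' where "\<mu>' n = (if n \<in> {1..N} then \<mu> n - ?mn else 0)" for n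
      have b: "\<mu> x \<le> ?mx \<and> ?mn \<le> \<mu> x" if "x \<in> {1..N}" for x
        using that by (auto intro!: Max_ge Min_le)
      have "\<mu>' \<in> K" unfolding K_def \<mu>'_def
        using b True by (fastforce simp: PiE_iff)
      then have "D \<mu>s \<le> D \<mu>'" using \<mu>s by auto
      also have "D \<mu>' = D (\<lambda>n. \<mu> n + (- ?mn))" by (rule Drestr) (auto simp: \<mu>'_def)
      also have "\<dots> = D \<mu>" by (rule Dshift)
      finally show ?thesis .
    next
      case False
      have "D \<mu>s \<le> D (\<lambda>_. 0)" using \<mu>s K0 by auto
      also have "\<dots> \<le> lam * ln (real N) + A" by (rule D0)
      also have "\<dots> = pm * R - A" unfolding R_def using pm by (simp add: field_simps)
      also have "\<dots> \<le> pm * (?mx - ?mn) - A" using False pm by (intro diff_right_mono mult_left_mono) auto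
      also have "\<dots> \<le> D \<mu>" by (rule Dlow)
      finally show ?thesis .
    qed
  qed
  show ?thesis
  proof (intro exI ballI)
    fix n0 assume n0: "n0 \<in> {1..N}"
    define d :: "nat \<Rightarrow> real" where "d n = (if n = n0 then 1 else 0)" for n
    define g where "g t = D (\<lambda>n. \<mu>s n + t * d n)" for t
    have g0: "g 0 = D \<mu>s" by (simp add: g_def)
    have gd: "DERIV g 0 :> (\<Sum>m=1..M. q m * (lam * ((\<Sum>n=1..N. exp ((a m n + \<mu>s n) / lam) * ((if n = n0 then 1 else 0) / lam)) / Z \<mu>s m)))
                 - (\<Sum>n=1..N. (if n = n0 then 1 else 0) * p n)"
      unfolding g_def D_def Z_def
      using Zpos[unfolded Z_def] Zne[unfolded Z_def] lam
      by (auto intro!: derivative_eq_intros sum.cong simp: d_def)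
    have "(\<Sum>m=1..M. q m * (lam * ((\<Sum>n=1..N. exp ((a m n + \<mu>s n) / lam) * ((if n = n0 then 1 else 0) / lam)) / Z \<mu>s m)))
                 - (\<Sum>n=1..N. (if n = n0 then 1 else 0) * p n) = 0"
      by (rule DERIV_local_min[OF gd zero_less_one]) (auto simp: g0 g_def glob d_def)
    moreover have "(\<Sum>n=1..N. exp ((a m n + \<mu>s n) / lam) * ((if n = n0 then 1 else 0) / lam)) = exp ((a m n0 + \<mu>s n0) / lam) / lam" for m
    proof -
      have "(\<Sum>n=1..N. exp ((a m n + \<mu>s n) / lam) * ((if n = n0 then 1 else 0) / lam)) =
            (\<Sum>n=1..N. if n = n0 then exp ((a m n0 + \<mu>s n0) / lam) / lam else 0)"
        by (rule sum.cong) auto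
      also have "\<dots> = exp ((a m n0 + \<mu>s n0) / lam) / lam" using n0 by simp
      finally show ?thesis .
    qed
    moreover have "(\<Sum>n=1..N. (if n = n0 then 1 else 0) * p n) = p n0"
      using n0 by (simp add: if_distrib[of "\<lambda>x. x * _"] cong: if_cong)
    ultimately have h1: "(\<Sum>m=1..M. q m * (lam * (exp ((a m n0 + \<mu>s n0) / lam) / lam / Z \<mu>s m))) = p n0"
      using lam by simp
    have h2: "q m * (lam * (exp ((a m n0 + \<mu>s n0) / lam) / lam / Z \<mu>s m)) =
        exp ((a m n0 + \<mu>s n0) / lam) / (\<Sum>n'=1..N. exp ((a m n' + \<mu>s n') / lam)) * q m" for m
      using lam by (simp add: Z_def)
    then show "(\<Sum>m=1..M. exp ((a m n0 + \<mu>s n0) / lam) / (\<Sum>n'=1..N. exp ((a m n' + \<mu>s n') / lam)) * q m) = p n0"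
      using h1 by (simp only: h2)
  qed
qed


lemma xlnx_tend: "((\<lambda>x::real. ln x * x) \<longlongrightarrow> 0) (at_right 0)"
  by real_asymp
lemma xlnx_cont: "continuous_on {0..} (\<lambda>x::real. ln x * x)"
proof -
  have "continuous (at x within {0..}) (\<lambda>x::real. ln x * x)" if "x \<ge> 0" for x
  proof (cases "x = 0")
    case True
    then show ?thesis using xlnx_tend
      by (simp add: continuous_within at_within_Ici_at_right)
  next
    case False
    then have "isCont (\<lambda>x::real. ln x * x) x" using that by (intro continuous_intros) auto
    then show ?thesis by (rule continuous_at_imp_continuous_at_within)
  qed
  then show ?thesis by (simp add: continuous_on_eq_continuous_within)
qed
lemma cont_P [continuous_intros]:
  "continuous_on S (\<lambda>z::(nat \<Rightarrow> nat \<Rightarrow> real) \<times> (nat \<Rightarrow> real). fst z m n)"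
proof -
  have "continuous_on UNIV (\<lambda>P::nat \<Rightarrow> nat \<Rightarrow> real. P m)" by simp
  then have "continuous_on UNIV (\<lambda>P::nat \<Rightarrow> nat \<Rightarrow> real. P m n)"
    using continuous_on_product_then_coordinatewise[OF \<open>continuous_on UNIV (\<lambda>P::nat \<Rightarrow> nat \<Rightarrow> real. P m)\<close>, of n] by simp
  then have "continuous_on UNIV (\<lambda>z::(nat \<Rightarrow> nat \<Rightarrow> real) \<times> (nat \<Rightarrow> real). fst z m n)"
    by (rule continuous_on_compose2[where f=fst]) (auto intro: continuous_on_fst continuous_on_id)
  then show ?thesis by (rule continuous_on_subset) auto
qed
lemma cont_q [continuous_intros]:
  "continuous_on S (\<lambda>z::(nat \<Rightarrow> nat \<Rightarrow> real) \<times> (nat \<Rightarrow> real). snd z m)"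
proof -
  have "continuous_on UNIV (\<lambda>z::(nat \<Rightarrow> nat \<Rightarrow> real) \<times> (nat \<Rightarrow> real). snd z m)"
    by (rule continuous_on_compose2[where f=snd and g="\<lambda>q. q m"]) (auto intro: continuous_on_snd continuous_on_id)
  then show ?thesis by (rule continuous_on_subset) auto
qed


lemma part3:
  assumes N: "N \<ge> 1" and lam: "lam > 0" and F: "feasible N M p P q"
  shows "objective N M v p lam G P q \<le> value_q N M v p lam G q \<mu> \<and>
         (objective N M v p lam G P q = value_q N M v p lam G q \<mu> \<longleftrightarrow>
          (\<forall>m\<in>{1..M}. q m > 0 \<longrightarrow> (\<forall>n\<in>{1..N}. P m n = gibbs_post N v lam G q \<mu> m n)))"
proof -
  let ?S = "{m\<in>{1..M}. q m > 0}"
  let ?Z = "partition_fn N v lam G q \<mu>"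
  define a where "a m n = v n * Imean G q m + \<mu> n" for m n
  define d where "d m = lam * ln (?Z m) - ((\<Sum>n=1..N. P m n * a m n) - lam * (\<Sum>n=1..N. ln (P m n) * P m n))" for m
  have q0: "\<forall>m\<in>{1..M}. q m \<ge> 0" and P0: "\<forall>m\<in>{1..M}. \<forall>n\<in>{1..N}. P m n \<ge> 0"
    and P1: "\<forall>m\<in>{1..M}. (\<Sum>n=1..N. P m n) = 1" and BP: "\<forall>n\<in>{1..N}. (\<Sum>m=1..M. P m n * q m) = p n"
    using F by (auto simp: feasible_def signal_simplex_def bayes_plausible_def)
  have Zeq: "?Z m = (\<Sum>n=1..N. exp (a m n / lam))" for m
    by (simp add: partition_fn_def a_def)
  have dge: "d m \<ge> 0" if "m \<in> ?S" for m
    using gibbs_ineq(1)[of "{1..N}" lam "P m" "a m"] N lam P0 P1 that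
    by (auto simp: d_def Zeq)
  have deq: "d m = 0 \<longleftrightarrow> (\<forall>n\<in>{1..N}. P m n = gibbs_post N v lam G q \<mu> m n)" if "m \<in> ?S" for m
    using gibbs_ineq(2)[of "{1..N}" lam "P m" "a m"] N lam P0 P1 that
    by (auto simp: d_def Zeq gibbs_post_def a_def)
  have Sfin: "finite ?S" by auto
  have e1: "q m * d m = lam * (ln (?Z m) * q m) - cond_mean N v P m * Imean G q m * q m
      - q m * (\<Sum>n=1..N. P m n * \<mu> n) + lam * (\<Sum>n=1..N. ln (P m n) * P m n * q m)" for m
  proof -
    have "(\<Sum>n=1..N. P m n * a m n) = cond_mean N v P m * Imean G q m + (\<Sum>n=1..N. P m n * \<mu> n)"
      by (simp add: a_def cond_mean_def distrib_left sum.distrib sum_distrib_left mult_ac)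
    then show ?thesis by (simp add: d_def algebra_simps sum_distrib_left sum_distrib_right)
  qed
  have e2: "(\<Sum>m\<in>?S. q m * (\<Sum>n=1..N. P m n * \<mu> n)) = (\<Sum>n=1..N. \<mu> n * p n)"
  proof -
    have "(\<Sum>m\<in>?S. q m * (\<Sum>n=1..N. P m n * \<mu> n)) = (\<Sum>n=1..N. \<mu> n * (\<Sum>m\<in>?S. P m n * q m))"
      by (simp add: sum_distrib_left sum_distrib_right mult_ac) (rule sum.swap)
    also have "\<dots> = (\<Sum>n=1..N. \<mu> n * (\<Sum>m=1..M. P m n * q m))"
      by (rule sum.cong[OF refl], rule arg_cong[where f="(*) _"], rule sum.mono_neutral_left) (use q0 in force)+
    also have "\<dots> = (\<Sum>n=1..N. \<mu> n * p n)" using BP by simp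
    finally show ?thesis .
  qed
  have key: "value_q N M v p lam G q \<mu> - objective N M v p lam G P q = (\<Sum>m\<in>?S. q m * d m)"
  proof -
    have "(\<Sum>m\<in>?S. q m * d m) = lam * (\<Sum>m\<in>?S. ln (?Z m) * q m) - (\<Sum>m\<in>?S. cond_mean N v P m * Imean G q m * q m)
        - (\<Sum>m\<in>?S. q m * (\<Sum>n=1..N. P m n * \<mu> n)) + lam * (\<Sum>m\<in>?S. \<Sum>n=1..N. ln (P m n) * P m n * q m)"
      by (simp add: e1 sum.distrib sum_subtractf sum_distrib_left)
    then show ?thesis unfolding e2
      by (simp add: value_q_def objective_def algebra_simps)
  qed
  have sum_ge: "(\<Sum>m\<in>?S. q m * d m) \<ge> 0" using dge by (intro sum_nonneg) auto
  have "(\<Sum>m\<in>?S. q m * d m) = 0 \<longleftrightarrow> (\<forall>m\<in>?S. q m * d m = 0)"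
    using dge by (intro sum_nonneg_eq_0_iff) auto
  also have "\<dots> \<longleftrightarrow> (\<forall>m\<in>?S. d m = 0)" by auto
  also have "\<dots> \<longleftrightarrow> (\<forall>m\<in>{1..M}. q m > 0 \<longrightarrow> (\<forall>n\<in>{1..N}. P m n = gibbs_post N v lam G q \<mu> m n))"
    using deq by auto
  finally show ?thesis using key sum_ge by auto
qed

lemma gibbs_feasible:
  assumes N: "N \<ge> 1" and q: "q \<in> signal_simplex M"
    and BP: "bayes_plausible N M p (gibbs_post N v lam G q \<mu>) q"
  shows "feasible N M p (gibbs_post N v lam G q \<mu>) q"
proof -
  have Zpos: "partition_fn N v lam G q \<mu> m > 0" for m
    unfolding partition_fn_def using N by (intro sum_pos) auto
  have "(\<Sum>n=1..N. gibbs_post N v lam G q \<mu> m n) = 1" for m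
    using Zpos[of m] by (simp add: gibbs_post_def sum_divide_distrib[symmetric] partition_fn_def)
  moreover have "gibbs_post N v lam G q \<mu> m n \<ge> 0" for m n
    using Zpos[of m] by (simp add: gibbs_post_def)
  ultimately show ?thesis using q BP by (simp add: feasible_def)
qed


lemma uniqueness:
  assumes N: "N \<ge> 1" and lam: "lam > 0" and q: "q \<in> signal_simplex M"
    and B1: "bayes_plausible N M p (gibbs_post N v lam G q \<mu>) q"
    and B2: "bayes_plausible N M p (gibbs_post N v lam G q \<mu>') q"
  shows "\<exists>c. \<forall>n\<in>{1..N}. \<mu>' n = \<mu> n + c"
proof -
  have F1: "feasible N M p (gibbs_post N v lam G q \<mu>) q" by (rule gibbs_feasible[OF N q B1])
  have F2: "feasible N M p (gibbs_post N v lam G q \<mu>') q" by (rule gibbs_feasible[OF N q B2])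
  note a = part3[OF N lam F1, of v G \<mu>] and b = part3[OF N lam F1, of v G \<mu>']
    and c = part3[OF N lam F2, of v G \<mu>] and d = part3[OF N lam F2, of v G \<mu>']
  have "objective N M v p lam G (gibbs_post N v lam G q \<mu>') q = value_q N M v p lam G q \<mu>"
    using a b c d by auto
  then have eq: "\<forall>m\<in>{1..M}. q m > 0 \<longrightarrow> (\<forall>n\<in>{1..N}. gibbs_post N v lam G q \<mu>' m n = gibbs_post N v lam G q \<mu> m n)"
    using c by blast
  have q0: "\<forall>m\<in>{1..M}. q m \<ge> 0" and q1: "(\<Sum>m=1..M. q m) = 1" using q by (auto simp: signal_simplex_def)
  obtain m0 where m0: "m0 \<in> {1..M}" "q m0 > 0"
  proof (rule ccontr)
    assume "\<not> thesis"
    then have "\<forall>m\<in>{1..M}. q m = 0" using that q0 by force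
    then show False using q1 by simp
  qed
  let ?Z = "partition_fn N v lam G q \<mu> m0" and ?Z' = "partition_fn N v lam G q \<mu>' m0"
  have Zpos: "?Z > 0" "?Z' > 0" unfolding partition_fn_def using N by (auto intro!: sum_pos)
  show ?thesis
  proof (intro exI ballI)
    fix n assume n: "n \<in> {1..N}"
    have "exp ((v n * Imean G q m0 + \<mu>' n) / lam) / ?Z' = exp ((v n * Imean G q m0 + \<mu> n) / lam) / ?Z"
      using eq m0 n by (auto simp: gibbs_post_def)
    then have "ln (exp ((v n * Imean G q m0 + \<mu>' n) / lam) / ?Z') = ln (exp ((v n * Imean G q m0 + \<mu> n) / lam) / ?Z)"
      by simp
    then have "(v n * Imean G q m0 + \<mu>' n) / lam - ln ?Z' = (v n * Imean G q m0 + \<mu> n) / lam - ln ?Z"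
      using Zpos by (simp add: ln_div)
    then show "\<mu>' n = \<mu> n + lam * (ln ?Z' - ln ?Z)"
      using lam by (simp add: field_simps)
  qed
qed

lemma cumq_step: "m \<ge> 1 \<Longrightarrow> cumq q m = cumq q (m - 1) + q m"
  by (cases m) (auto simp: cumq_def)

lemma cumq_bounds:
  assumes q: "q \<in> signal_simplex M" and k: "k \<le> M"
  shows "0 \<le> cumq q k" "cumq q k \<le> 1"
proof -
  have q0: "\<forall>m\<in>{1..M}. q m \<ge> 0" and q1: "(\<Sum>m=1..M. q m) = 1" using q by (auto simp: signal_simplex_def)
  show "0 \<le> cumq q k" unfolding cumq_def using q0 k by (intro sum_nonneg) auto
  have "cumq q k \<le> (\<Sum>m=1..M. q m)" unfolding cumq_def using q0 k by (intro sum_mono2) auto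
  then show "cumq q k \<le> 1" using q1 by simp
qed

definition obj' :: "nat \<Rightarrow> nat \<Rightarrow> (nat \<Rightarrow> real) \<Rightarrow> (nat \<Rightarrow> real) \<Rightarrow> real \<Rightarrow> (real \<Rightarrow> real)
   \<Rightarrow> (nat \<Rightarrow> nat \<Rightarrow> real) \<times> (nat \<Rightarrow> real) \<Rightarrow> real" where
  "obj' N M v p lam f z =
     (\<Sum>m=1..M. cond_mean N v (fst z) m * (f (cumq (snd z) m) - f (cumq (snd z) (m - 1))))
     - lam * ((\<Sum>m=1..M. \<Sum>n=1..N. ln (fst z m n) * fst z m n * snd z m) - (\<Sum>n=1..N. ln (p n) * p n))"

lemma objective_eq_obj':
  assumes fint: "set_integrable lborel {0<..<1} (inv_cdf G)" and F: "feasible N M p P q"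
  shows "objective N M v p lam G P q = obj' N M v p lam (\<lambda>x. integral {0..x} (inv_cdf G)) (P, q)"
proof -
  let ?S = "{m\<in>{1..M}. q m > 0}"
  let ?\<Phi> = "\<lambda>x. integral {0..x} (inv_cdf G)"
  have q: "q \<in> signal_simplex M" using F by (simp add: feasible_def)
  have q0: "\<forall>m\<in>{1..M}. q m \<ge> 0" using q by (auto simp: signal_simplex_def)
  have i1: "(\<Sum>m\<in>?S. cond_mean N v P m * Imean G q m * q m) =
        (\<Sum>m=1..M. cond_mean N v P m * (?\<Phi> (cumq q m) - ?\<Phi> (cumq q (m - 1))))"
  proof (rule sum.mono_neutral_cong_left)
    show "\<forall>m\<in>{1..M} - ?S. cond_mean N v P m * (?\<Phi> (cumq q m) - ?\<Phi> (cumq q (m - 1))) = 0"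
    proof
      fix m assume m: "m \<in> {1..M} - ?S"
      then have "q m = 0" using q0 by force
      then show "cond_mean N v P m * (?\<Phi> (cumq q m) - ?\<Phi> (cumq q (m - 1))) = 0"
        using cumq_step[of m q] m by simp
    qed
    show "\<And>m. m \<in> ?S \<Longrightarrow> cond_mean N v P m * Imean G q m * q m =
        cond_mean N v P m * (?\<Phi> (cumq q m) - ?\<Phi> (cumq q (m - 1)))"
    proof -
      fix m assume m: "m \<in> ?S"
      have st: "cumq q m = cumq q (m - 1) + q m" using m by (intro cumq_step) auto
      have "Imean G q m * q m = interval_lebesgue_integral lborel (ereal (cumq q (m - 1))) (ereal (cumq q m)) (inv_cdf G)"
        using m by (simp add: Imean_def)
      also have "\<dots> = ?\<Phi> (cumq q m) - ?\<Phi> (cumq q (m - 1))"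
        using m st cumq_bounds[OF q, of "m - 1"] cumq_bounds[OF q, of m]
        by (intro J_eq[OF fint]) auto
      finally show "cond_mean N v P m * Imean G q m * q m =
        cond_mean N v P m * (?\<Phi> (cumq q m) - ?\<Phi> (cumq q (m - 1)))" by (simp add: mult.assoc)
    qed
  qed auto
  have i2: "(\<Sum>m\<in>?S. \<Sum>n=1..N. ln (P m n) * P m n * q m) = (\<Sum>m=1..M. \<Sum>n=1..N. ln (P m n) * P m n * q m)"
  proof (rule sum.mono_neutral_left)
    show "\<forall>i\<in>{1..M} - ?S. (\<Sum>n = 1..N. ln (P i n) * P i n * q i) = 0"
    proof
      fix i assume "i \<in> {1..M} - ?S"
      then have "q i = 0" using q0 by force
      then show "(\<Sum>n = 1..N. ln (P i n) * P i n * q i) = 0" by simp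
    qed
  qed auto
  show ?thesis unfolding objective_def obj'_def i1 i2 by simp
qed


lemma part4:
  assumes N: "N \<ge> 1" and M: "M \<ge> 1" and p0: "\<forall>n\<in>{1..N}. p n > 0" and p1: "(\<Sum>n=1..N. p n) = 1"
    and fint: "set_integrable lborel {0<..<1} (inv_cdf G)"
  shows "\<exists>P0 q0. feasible N M p P0 q0 \<and>
     (\<forall>P q. feasible N M p P q \<longrightarrow> objective N M v p lam G P q \<le> objective N M v p lam G P0 q0)"
proof -
  define \<Phi> where "\<Phi> = (\<lambda>x. integral {0..x} (inv_cdf G))"
  define h where "h = (\<lambda>x::real. ln x * x)"
  define BoxP where "BoxP = PiE UNIV (\<lambda>m. PiE UNIV (\<lambda>n. if m \<in> {1..M} \<and> n \<in> {1..N} then {0..1} else {0::real}))"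
  define BoxQ where "BoxQ = PiE UNIV (\<lambda>m. if m \<in> {1..M} then {0..1} else {0::real})"
  define K where "K = (BoxP \<times> BoxQ) \<inter> {z. feasible N M p (fst z) (snd z)}"
  define C where "C = {z::(nat \<Rightarrow> nat \<Rightarrow> real) \<times> (nat \<Rightarrow> real). (\<Sum>m=1..M. snd z m) = 1}
     \<inter> (\<Inter>m\<in>{1..M}. {z. (\<Sum>n=1..N. fst z m n) = 1})
     \<inter> (\<Inter>n\<in>{1..N}. {z. (\<Sum>m=1..M. fst z m n * snd z m) = p n})"
  have closedC: "closed C" unfolding C_def
    by (intro closed_Int closed_INT ballI closed_Collect_eq continuous_intros)
  have boxP: "fst z m n \<in> (if m \<in> {1..M} \<and> n \<in> {1..N} then {0..1} else {0})"
    if "z \<in> BoxP \<times> BoxQ" for z m n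
  proof -
    have "fst z \<in> BoxP" using that by (simp add: mem_Times_iff)
    then have "fst z m \<in> PiE UNIV (\<lambda>n. if m \<in> {1..M} \<and> n \<in> {1..N} then {0..1} else {0::real})"
      unfolding BoxP_def by (rule PiE_mem) simp
    then show ?thesis by (rule PiE_mem) simp
  qed
  have boxQ: "snd z m \<in> (if m \<in> {1..M} then {0..1} else {0})"
    if "z \<in> BoxP \<times> BoxQ" for z m
  proof -
    have "snd z \<in> BoxQ" using that by (simp add: mem_Times_iff)
    then show ?thesis unfolding BoxQ_def by (rule PiE_mem) simp
  qed
  have boxnn: "(\<forall>m\<in>{1..M}. \<forall>n\<in>{1..N}. fst z m n \<ge> 0) \<and> (\<forall>m\<in>{1..M}. snd z m \<ge> 0)"
    if "z \<in> BoxP \<times> BoxQ" for z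
  proof (intro conjI ballI)
    fix m n assume "m \<in> {1..M}" "n \<in> {1..N}"
    then show "fst z m n \<ge> 0" using boxP[OF that, of m n] by simp
  next
    fix m assume "m \<in> {1..M}"
    then show "snd z m \<ge> 0" using boxQ[OF that, of m] by simp
  qed
  have KC: "K = (BoxP \<times> BoxQ) \<inter> C"
    unfolding K_def C_def using boxnn
    by (auto simp: feasible_def signal_simplex_def bayes_plausible_def)
  have cBP: "compact BoxP" unfolding BoxP_def by (intro compact_box) auto
  have cBQ: "compact BoxQ" unfolding BoxQ_def by (intro compact_box) auto
  have cK: "compact K" unfolding KC by (intro compact_Int_closed compact_Times cBP cBQ closedC)
  define P1 where "P1 m n = (if m \<in> {1..M} \<and> n \<in> {1..N} then p n else 0)" for m n
  define q1 :: "nat \<Rightarrow> real" where "q1 m = (if m = 1 then 1 else 0)" for m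
  have ple1: "p n \<le> 1" if "n \<in> {1..N}" for n
  proof -
    have "p n \<le> (\<Sum>n=1..N. p n)" using that p0 by (intro member_le_sum) (auto intro: less_imp_le)
    then show ?thesis using p1 by simp
  qed
  have "(P1, q1) \<in> K"
  proof -
    have "(\<Sum>m=1..M. q1 m) = 1" using M by (simp add: q1_def)
    moreover have "(\<Sum>m=1..M. P1 m n * q1 m) = p n" if "n \<in> {1..N}" for n
    proof -
      have "(\<Sum>m=1..M. P1 m n * q1 m) = (\<Sum>m=1..M. if m = 1 then p n else 0)"
        using that by (intro sum.cong) (auto simp: P1_def q1_def)
      then show ?thesis using M by simp
    qed
    moreover have "(\<Sum>n=1..N. P1 m n) = 1" if "m \<in> {1..M}" for m
      using that p1 by (simp add: P1_def)
    ultimately show ?thesis using p0 ple1 M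
      unfolding K_def BoxP_def BoxQ_def
      by (auto simp: feasible_def signal_simplex_def bayes_plausible_def PiE_iff P1_def q1_def less_imp_le)
  qed
  then have Kne: "K \<noteq> {}" by auto
  define O2 where "O2 z = (\<Sum>m=1..M. (\<Sum>n=1..N. v n * fst z m n) * (\<Phi> (cumq (snd z) m) - \<Phi> (cumq (snd z) (m - 1))))
     - lam * ((\<Sum>m=1..M. \<Sum>n=1..N. h (fst z m n) * snd z m) - (\<Sum>n=1..N. ln (p n) * p n))" for z
  have O2eq: "obj' N M v p lam \<Phi> z = O2 z" for z
    by (simp add: obj'_def O2_def h_def cond_mean_def)
  have Ksimp: "snd z \<in> signal_simplex M" if "z \<in> K" for z using that by (simp add: K_def feasible_def)
  have Knn: "fst z m n \<ge> 0" if "z \<in> K" for z m n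
  proof -
    have "z \<in> BoxP \<times> BoxQ" using that by (simp add: K_def)
    from boxP[OF this, of m n] show ?thesis by (auto split: if_splits)
  qed
  have cPhi: "continuous_on K (\<lambda>z. \<Phi> (cumq (snd z) k))" if "k \<le> M" for k
  proof (rule continuous_on_compose2[OF Phi_cont[OF fint, folded \<Phi>_def]])
    show "continuous_on K (\<lambda>z. cumq (snd z) k)" unfolding cumq_def by (intro continuous_intros)
    show "(\<lambda>z. cumq (snd z) k) ` K \<subseteq> {0..1}" using cumq_bounds[OF Ksimp that] by auto
  qed
  have ch: "continuous_on K (\<lambda>z. h (fst z m n))" for m n
  proof (rule continuous_on_compose2[OF xlnx_cont[folded h_def]])
    show "continuous_on K (\<lambda>z. fst z m n)" by (intro continuous_intros)
    show "(\<lambda>z. fst z m n) ` K \<subseteq> {0..}" using Knn by auto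
  qed
  have cO2: "continuous_on K O2" unfolding O2_def
    by (intro continuous_intros cPhi ch) auto
  obtain z0 where z0: "z0 \<in> K" "\<forall>z\<in>K. O2 z \<le> O2 z0"
    using continuous_attains_sup[OF cK Kne cO2] by blast
  show ?thesis
  proof (intro exI conjI allI impI)
    show F0: "feasible N M p (fst z0) (snd z0)" using z0 by (simp add: K_def)
    fix P q assume F: "feasible N M p P q"
    define P' where "P' m n = (if m \<in> {1..M} \<and> n \<in> {1..N} then P m n else 0)" for m n
    define q' where "q' m = (if m \<in> {1..M} then q m else 0)" for m
    have q: "q \<in> signal_simplex M" using F by (simp add: feasible_def)
    have cq: "cumq q' k = cumq q k" if "k \<le> M" for k
      unfolding cumq_def using that by (intro sum.cong) (auto simp: q'_def)
    have F': "feasible N M p P' q'" using F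
      by (auto simp: feasible_def signal_simplex_def bayes_plausible_def P'_def q'_def)
    have Pnn: "\<forall>m\<in>{1..M}. \<forall>n\<in>{1..N}. P m n \<ge> 0" and P1s: "\<forall>m\<in>{1..M}. (\<Sum>n=1..N. P m n) = 1"
      and qnn: "\<forall>m\<in>{1..M}. q m \<ge> 0" and q1s: "(\<Sum>m=1..M. q m) = 1"
      using F by (auto simp: feasible_def signal_simplex_def)
    have Ple1: "P m n \<le> 1" if "m \<in> {1..M}" "n \<in> {1..N}" for m n
    proof -
      have "P m n \<le> (\<Sum>n=1..N. P m n)" using that Pnn by (intro member_le_sum) auto
      then show ?thesis using P1s that by simp
    qed
    have qle1: "q m \<le> 1" if "m \<in> {1..M}" for m
    proof -
      have "q m \<le> (\<Sum>m=1..M. q m)" using that qnn by (intro member_le_sum) auto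
      then show ?thesis using q1s by simp
    qed
    have "(P', q') \<in> K" unfolding K_def BoxP_def BoxQ_def using F' Pnn Ple1 qnn qle1
      by (auto simp: PiE_iff P'_def q'_def)
    then have le: "O2 (P', q') \<le> O2 z0" using z0 by blast
    have "obj' N M v p lam \<Phi> (P', q') = obj' N M v p lam \<Phi> (P, q)"
      unfolding obj'_def cond_mean_def fst_conv snd_conv
      by (intro arg_cong2[where f="(-)"] arg_cong2[where f="(*)"] refl sum.cong) (auto simp: P'_def q'_def cq)
    then have "objective N M v p lam G P q = O2 (P', q')"
      using objective_eq_obj'[OF fint F, of v lam, folded \<Phi>_def] O2eq by simp
    also have "\<dots> \<le> O2 z0" by (rule le)
    also have "O2 z0 = objective N M v p lam G (fst z0) (snd z0)"
      using objective_eq_obj'[OF fint F0, of v lam, folded \<Phi>_def] O2eq by simp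
    finally show "objective N M v p lam G P q \<le> objective N M v p lam G (fst z0) (snd z0)" .
  qed
qed


theorem proposition6:
  fixes N M :: nat and v p :: "nat \<Rightarrow> real" and lam \<sigma>Z T :: real and G :: "real \<Rightarrow> real"
  assumes "N \<ge> 2"
    and "inj_on v {1..N}"
    and "\<forall>n\<in>{1..N}. p n > 0"
    and "(\<Sum>n=1..N. p n) = 1"
    and "lam > 0" and "\<sigma>Z > 0" and "T > 0"
    and "M \<ge> 1"
    and "G = normal_cdf (\<sigma>Z * sqrt T)"
  shows
    \<comment> \<open>for each q, a Bayes-plausible multiplier vector exists and is unique up to a constant\<close>
    "(\<forall>q\<in>signal_simplex M.
        (\<exists>\<mu>. bayes_plausible N M p (gibbs_post N v lam G q \<mu>) q) \<and>
        (\<forall>\<mu> \<mu>'. bayes_plausible N M p (gibbs_post N v lam G q \<mu>) q \<longrightarrow>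
                 bayes_plausible N M p (gibbs_post N v lam G q \<mu>') q \<longrightarrow>
                 (\<exists>c. \<forall>n\<in>{1..N}. \<mu>' n = \<mu> n + c)))
     \<and>
     \<comment> \<open>for each q, the Gibbs posteriors are feasible and attain the value\<close>
     (\<forall>q \<mu>. q \<in> signal_simplex M \<longrightarrow> bayes_plausible N M p (gibbs_post N v lam G q \<mu>) q \<longrightarrow>
        feasible N M p (gibbs_post N v lam G q \<mu>) q \<and>
        objective N M v p lam G (gibbs_post N v lam G q \<mu>) q = value_q N M v p lam G q \<mu>)
     \<and>
     \<comment> \<open>and they are the unique optimal posteriors for the states with q(s_m) > 0\<close>
     (\<forall>q \<mu> P. bayes_plausible N M p (gibbs_post N v lam G q \<mu>) q \<longrightarrow> feasible N M p P q \<longrightarrow>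
        objective N M v p lam G P q \<le> value_q N M v p lam G q \<mu> \<and>
        (objective N M v p lam G P q = value_q N M v p lam G q \<mu> \<longleftrightarrow>
           (\<forall>m\<in>{1..M}. q m > 0 \<longrightarrow> (\<forall>n\<in>{1..N}. P m n = gibbs_post N v lam G q \<mu> m n))))
     \<and>
     \<comment> \<open>an optimal q exists; the optimal value is the maximum over q of the value\<close>
     (\<exists>q0 \<mu>0. q0 \<in> signal_simplex M \<and> bayes_plausible N M p (gibbs_post N v lam G q0 \<mu>0) q0 \<and>
        (\<forall>q \<mu>. q \<in> signal_simplex M \<longrightarrow> bayes_plausible N M p (gibbs_post N v lam G q \<mu>) q \<longrightarrow>
           value_q N M v p lam G q \<mu> \<le> value_q N M v p lam G q0 \<mu>0) \<and>
        (\<forall>P q. feasible N M p P q \<longrightarrow>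
           objective N M v p lam G P q \<le> value_q N M v p lam G q0 \<mu>0))"
proof -
  have N1: "N \<ge> 1" using assms(1) by simp
  have lam: "lam > 0" using assms(5) .
  have s: "\<sigma>Z * sqrt T > 0" using assms(6,7) by simp
  have fint: "set_integrable lborel {0<..<1} (inv_cdf G)"
    using quantile_facts[OF s] assms(9) by simp
  have p0: "\<forall>n\<in>{1..N}. p n > 0" and p1: "(\<Sum>n=1..N. p n) = 1" using assms(3,4) by auto
  have ex: "\<exists>\<mu>. bayes_plausible N M p (gibbs_post N v lam G q \<mu>) q" if q: "q \<in> signal_simplex M" for q
  proof -
    have q0: "\<forall>m\<in>{1..M}. q m \<ge> 0" and q1: "(\<Sum>m=1..M. q m) = 1" using q by (auto simp: signal_simplex_def)
    from existence_mu[OF N1 lam q0 q1 p0 p1, of "\<lambda>m n. v n * Imean G q m"]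
    obtain \<mu> where "\<forall>n\<in>{1..N}. (\<Sum>m=1..M. exp ((v n * Imean G q m + \<mu> n) / lam) /
            (\<Sum>n'=1..N. exp ((v n' * Imean G q m + \<mu> n') / lam)) * q m) = p n" by blast
    then have "bayes_plausible N M p (gibbs_post N v lam G q \<mu>) q"
      by (simp add: bayes_plausible_def gibbs_post_def partition_fn_def)
    then show ?thesis by blast
  qed
  have P1: "\<forall>q\<in>signal_simplex M.
        (\<exists>\<mu>. bayes_plausible N M p (gibbs_post N v lam G q \<mu>) q) \<and>
        (\<forall>\<mu> \<mu>'. bayes_plausible N M p (gibbs_post N v lam G q \<mu>) q \<longrightarrow>
                 bayes_plausible N M p (gibbs_post N v lam G q \<mu>') q \<longrightarrow>
                 (\<exists>c. \<forall>n\<in>{1..N}. \<mu>' n = \<mu> n + c))"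
    using ex uniqueness[OF N1 lam] by blast
  have P2: "\<forall>q \<mu>. q \<in> signal_simplex M \<longrightarrow> bayes_plausible N M p (gibbs_post N v lam G q \<mu>) q \<longrightarrow>
        feasible N M p (gibbs_post N v lam G q \<mu>) q \<and>
        objective N M v p lam G (gibbs_post N v lam G q \<mu>) q = value_q N M v p lam G q \<mu>"
  proof (intro allI impI conjI)
    fix q \<mu> assume q: "q \<in> signal_simplex M" and B: "bayes_plausible N M p (gibbs_post N v lam G q \<mu>) q"
    show F: "feasible N M p (gibbs_post N v lam G q \<mu>) q" by (rule gibbs_feasible[OF N1 q B])
    show "objective N M v p lam G (gibbs_post N v lam G q \<mu>) q = value_q N M v p lam G q \<mu>"
      using part3[OF N1 lam F, of v G \<mu>] by blast
  qed
  have P3: "\<forall>q \<mu> P. bayes_plausible N M p (gibbs_post N v lam G q \<mu>) q \<longrightarrow> feasible N M p P q \<longrightarrow>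
        objective N M v p lam G P q \<le> value_q N M v p lam G q \<mu> \<and>
        (objective N M v p lam G P q = value_q N M v p lam G q \<mu> \<longleftrightarrow>
           (\<forall>m\<in>{1..M}. q m > 0 \<longrightarrow> (\<forall>n\<in>{1..N}. P m n = gibbs_post N v lam G q \<mu> m n)))"
    using part3[OF N1 lam] by blast
  obtain P0 q0 where F0: "feasible N M p P0 q0"
    and opt: "\<forall>P q. feasible N M p P q \<longrightarrow> objective N M v p lam G P q \<le> objective N M v p lam G P0 q0"
    using part4[OF N1 assms(8) p0 p1 fint, of v lam] by blast
  have q0s: "q0 \<in> signal_simplex M" using F0 by (simp add: feasible_def)
  obtain \<mu>0 where B0: "bayes_plausible N M p (gibbs_post N v lam G q0 \<mu>0) q0" using ex[OF q0s] by blast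
  have V0: "objective N M v p lam G P0 q0 \<le> value_q N M v p lam G q0 \<mu>0"
    using part3[OF N1 lam F0, of v G \<mu>0] by blast
  have P4: "\<exists>q0 \<mu>0. q0 \<in> signal_simplex M \<and> bayes_plausible N M p (gibbs_post N v lam G q0 \<mu>0) q0 \<and>
        (\<forall>q \<mu>. q \<in> signal_simplex M \<longrightarrow> bayes_plausible N M p (gibbs_post N v lam G q \<mu>) q \<longrightarrow>
           value_q N M v p lam G q \<mu> \<le> value_q N M v p lam G q0 \<mu>0) \<and>
        (\<forall>P q. feasible N M p P q \<longrightarrow>
           objective N M v p lam G P q \<le> value_q N M v p lam G q0 \<mu>0)"
  proof (intro exI conjI allI impI)
    show "q0 \<in> signal_simplex M" by (rule q0s)
    show "bayes_plausible N M p (gibbs_post N v lam G q0 \<mu>0) q0" by (rule B0)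
    fix q \<mu> assume q: "q \<in> signal_simplex M" and B: "bayes_plausible N M p (gibbs_post N v lam G q \<mu>) q"
    have "value_q N M v p lam G q \<mu> = objective N M v p lam G (gibbs_post N v lam G q \<mu>) q"
      using P2 q B by simp
    also have "\<dots> \<le> objective N M v p lam G P0 q0" using opt P2 q B by blast
    finally show "value_q N M v p lam G q \<mu> \<le> value_q N M v p lam G q0 \<mu>0" using V0 by linarith
  next
    fix P q assume "feasible N M p P q"
    then show "objective N M v p lam G P q \<le> value_q N M v p lam G q0 \<mu>0" using opt V0 by force
  qed
  show ?thesis using P1 P2 P3 P4 by blast
qed


end
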